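(* Let $M$ be a finite monoid. The map sending a two-sided idempotent ideal $I$ of $M$ to the set of $\mathfrak I$-classes of idempotents lying in $I$ is a bijection $\mathscr{II}(M)\to\mathsf{Open}(\mathsf{Idem}_{\mathfrak I}(M))$, where $\mathsf{Idem}_{\mathfrak I}(M)$ carries the order topology of the order $\le_{\mathfrak I}$. Via $\mathsf F_M\cong\mathsf{Idem}_{\mathfrak I}(M)$ this gives a bijection between $\mathscr{II}(M)$ (hence between localising subcategories of the topos of right $M$-sets) and the open subsets of $\mathsf F_M$.
   Context: A two-sided ideal $I$ (possibly empty) is idempotent if $I=I^2=\{xy\mid x,y\in I\}$; $\mathscr{II}(M)$ is the set of these. For idempotents $e,f$: $e\,\mathfrak I\,f$ iff $MeM=MfM$, and $\mathsf{Idem}_{\mathfrak I}(M)$ is the set of $\mathfrak I$-classes of idempotents, partially ordered by $[e]\le_{\mathfrak I}[f]$ iff $MeM\subseteq MfM$. For a poset $P$, the order topology has as open sets the subsets $S\subseteq P$ such that $y\in S$ and $x\le y$ imply $x\in S$; $\mathsf{Open}(P)$ is the set of open subsets. $\mathsf F_M$ is the set of isomorphism classes of points of the topos of right $M$-sets, which is in bijection with $\mathsf{Idem}_{\mathfrak I}(M)$ via $[Me]\leftrightarrow[e]$. *)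

theory Defs
  imports Main
begin

text \<open>The monoid M is the universe of a type of class monoid_mult.\<close>

definition two_sided_ideal :: "'a::monoid_mult set \<Rightarrow> bool" where
  "two_sided_ideal I \<longleftrightarrow> (\<forall>x\<in>I. \<forall>m. m * x \<in> I \<and> x * m \<in> I)"

definition idempotent_ideals :: "'a::monoid_mult set set" where
  "idempotent_ideals = {I. two_sided_ideal I \<and> I = {x * y | x y. x \<in> I \<and> y \<in> I}}"

definition idem :: "'a::monoid_mult \<Rightarrow> bool" where
  "idem e \<longleftrightarrow> e * e = e"

definition MxM :: "'a::monoid_mult \<Rightarrow> 'a set" where
  "MxM e = {m * e * n | m n. True}"

definition Jclass :: "'a::monoid_mult \<Rightarrow> 'a set" where
  "Jclass e = {f. idem f \<and> MxM f = MxM e}"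

definition Idem_J :: "'a::monoid_mult set set" where
  "Idem_J = {Jclass e | e. idem e}"

definition le_J :: "'a::monoid_mult set \<Rightarrow> 'a set \<Rightarrow> bool" where
  "le_J X Y \<longleftrightarrow> (\<exists>e f. idem e \<and> idem f \<and> X = Jclass e \<and> Y = Jclass f \<and> MxM e \<subseteq> MxM f)"

text \<open>Open sets of the order topology: down-closed subsets.\<close>
definition Open_order :: "'b set \<Rightarrow> ('b \<Rightarrow> 'b \<Rightarrow> bool) \<Rightarrow> 'b set set" where
  "Open_order P le = {S. S \<subseteq> P \<and> (\<forall>y\<in>S. \<forall>x\<in>P. le x y \<longrightarrow> x \<in> S)}"

definition idem_classes_in :: "'a::monoid_mult set \<Rightarrow> 'a set set" where
  "idem_classes_in I = {Jclass e | e. idem e \<and> e \<in> I}"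

end

theory Submission
  imports Defs
begin

lemma pigeon:
  fixes f :: "nat \<Rightarrow> 'a::finite"
  shows "\<exists>i j. i < j \<and> f i = f j"
proof -
  have "\<not> inj_on f {0..card (UNIV::'a set)}"
  proof
    assume "inj_on f {0..card (UNIV::'a set)}"
    hence "card (f ` {0..card (UNIV::'a set)}) = Suc (card (UNIV::'a set))"
      by (simp add: card_image)
    moreover have "card (f ` {0..card (UNIV::'a set)}) \<le> card (UNIV::'a set)"
      by (rule card_mono) auto
    ultimately show False by simp
  qed
  then obtain i j where "i \<noteq> j" "f i = f j" unfolding inj_on_def by blast
  thus ?thesis by (metis linorder_neqE_nat)
qed

lemma idem_power:
  fixes q :: "'a::{monoid_mult,finite}"
  shows "\<exists>k\<ge>1. idem (q ^ k)"
proof -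
  obtain a b where ab: "a < b" "q ^ Suc a = q ^ Suc b"
    using pigeon[of "\<lambda>m. q ^ Suc m"] by blast
  define a' where "a' = Suc a"
  define p where "p = b - a"
  have p1: "p \<ge> 1" using ab unfolding p_def by simp
  have base: "q ^ (a' + p) = q ^ a'" using ab unfolding a'_def p_def by simp
  have step: "q ^ (c + p) = q ^ c" if "c \<ge> a'" for c
  proof -
    have "q ^ (c + p) = q ^ (c - a') * q ^ (a' + p)"
      using that by (simp add: power_add[symmetric])
    also have "\<dots> = q ^ (c - a') * q ^ a'" using base by simp
    also have "\<dots> = q ^ c" using that by (simp add: power_add[symmetric])
    finally show ?thesis .
  qed
  have iter: "q ^ (c + t * p) = q ^ c" if "c \<ge> a'" for c t
  proof (induction t)
    case 0 then show ?case by simp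
  next
    case (Suc t)
    have "q ^ (c + Suc t * p) = q ^ ((c + t * p) + p)" by (simp add: algebra_simps)
    also have "\<dots> = q ^ (c + t * p)" using step that by simp
    finally show ?case using Suc by simp
  qed
  define k where "k = a' * p"
  have "k \<ge> a'" using p1 unfolding k_def by simp
  hence "q ^ k * q ^ k = q ^ k" using iter[of k a'] by (simp add: power_add[symmetric] k_def)
  moreover have "k \<ge> 1" using p1 unfolding k_def a'_def by simp
  ultimately show ?thesis unfolding idem_def by blast
qed

lemma x_in_MxM: "x \<in> MxM x"
  unfolding MxM_def by (rule CollectI, rule exI[of _ 1], rule exI[of _ 1]) simp

lemma MxM_sub: "two_sided_ideal I \<Longrightarrow> e \<in> I \<Longrightarrow> MxM e \<subseteq> I"
  unfolding MxM_def two_sided_ideal_def by auto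

lemma MxM_mono: "x \<in> MxM e \<Longrightarrow> MxM x \<subseteq> MxM e"
  unfolding MxM_def by clarsimp (metis mult.assoc)

lemma power_in_ideal: "two_sided_ideal I \<Longrightarrow> q \<in> I \<Longrightarrow> k \<ge> 1 \<Longrightarrow> q ^ k \<in> I"
  unfolding two_sided_ideal_def by (cases k) auto

lemma ideal_generated:
  fixes I :: "'a::{monoid_mult,finite} set"
  assumes I: "I \<in> idempotent_ideals" and x: "x \<in> I"
  shows "\<exists>e. idem e \<and> e \<in> I \<and> x \<in> MxM e"
proof -
  have id: "two_sided_ideal I" and sq: "I = {x * y | x y. x \<in> I \<and> y \<in> I}"
    using I unfolding idempotent_ideals_def by auto
  have ex: "\<exists>a b. a \<in> I \<and> b \<in> I \<and> z = a * b" if "z \<in> I" for z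
    using sq that by blast
  define ga where "ga z = (SOME a. \<exists>b. a \<in> I \<and> b \<in> I \<and> z = a * b)" for z
  define gb where "gb z = (SOME b. ga z \<in> I \<and> b \<in> I \<and> z = ga z * b)" for z
  have g: "fst (ga z, gb z) \<in> I \<and> snd (ga z, gb z) \<in> I \<and> z = fst (ga z, gb z) * snd (ga z, gb z)" if "z \<in> I" for z
  proof -
    have "\<exists>b. ga z \<in> I \<and> b \<in> I \<and> z = ga z * b"
      unfolding ga_def by (rule someI_ex) (use ex[OF that] in blast)
    hence "ga z \<in> I \<and> gb z \<in> I \<and> z = ga z * gb z"
      unfolding gb_def by (rule someI_ex)
    thus ?thesis by simp
  qed
  define g where "g z = (ga z, gb z)" for z
  have g: "\<And>z. z \<in> I \<Longrightarrow> fst (g z) \<in> I \<and> snd (g z) \<in> I \<and> z = fst (g z) * snd (g z)"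
    unfolding g_def using g by blast
  define xs where "xs = rec_nat x (\<lambda>_ z. snd (g z))"
  have xs0: "xs 0 = x" and xsS: "\<And>k. xs (Suc k) = snd (g (xs k))" unfolding xs_def by simp_all
  have xsI: "xs k \<in> I" for k by (induction k) (use x g in \<open>auto simp: xs0 xsS\<close>)
  define P where "P = rec_nat 1 (\<lambda>k p. p * fst (g (xs k)))"
  have P0: "P 0 = 1" and PS: "\<And>k. P (Suc k) = P k * fst (g (xs k))" unfolding P_def by simp_all
  have Px: "x = P k * xs k" for k
  proof (induction k)
    case 0 then show ?case by (simp add: P0 xs0)
  next
    case (Suc k)
    have "xs k = fst (g (xs k)) * snd (g (xs k))" using g xsI by blast
    then show ?case using Suc by (simp add: PS xsS mult.assoc)
  qed
  define R where "R i = rec_nat 1 (\<lambda>d r. r * fst (g (xs (i + d))))" for i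
  have R0: "R i 0 = 1" and RS: "\<And>d. R i (Suc d) = R i d * fst (g (xs (i + d)))" for i
    unfolding R_def by simp_all
  have PR: "P (i + d) = P i * R i d" for i d
    by (induction d) (simp_all add: R0 RS PS mult.assoc)
  have RI: "d \<ge> 1 \<Longrightarrow> R i d \<in> I" for i d
  proof (induction d)
    case 0 then show ?case by simp
  next
    case (Suc d)
    have f: "fst (g (xs (i + d))) \<in> I" using g xsI by blast
    show ?case
    proof (cases d)
      case 0 then show ?thesis using f by (simp add: RS R0)
    next
      case (Suc d')
      then have "R i d \<in> I" using Suc.IH by simp
      then show ?thesis using id unfolding two_sided_ideal_def by (simp add: RS)
    qed
  qed
  obtain i j where ij: "i < j" "P i = P j" using pigeon[of P] by blast
  define Q where "Q = R i (j - i)"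
  have QI: "Q \<in> I" unfolding Q_def using ij by (intro RI) simp
  have PQ: "P i = P i * Q" using PR[of i "j - i"] ij unfolding Q_def by simp
  have PQk: "P i = P i * Q ^ k" for k
  proof (induction k)
    case 0 then show ?case by simp
  next
    case (Suc k)
    have "P i * Q ^ Suc k = (P i * Q) * Q ^ k" by (simp add: mult.assoc)
    then show ?case using PQ Suc by simp
  qed
  obtain k where k: "k \<ge> 1" "idem (Q ^ k)" using idem_power[of Q] by blast
  have eI: "Q ^ k \<in> I" using power_in_ideal[OF id QI k(1)] .
  have "x = P i * Q ^ k * xs i" using Px[of i] PQk[of k] by simp
  hence "x \<in> MxM (Q ^ k)" unfolding MxM_def by blast
  thus ?thesis using k eI by blast
qed

lemma Jclass_eq: "idem e \<Longrightarrow> idem f \<Longrightarrow> Jclass e = Jclass f \<Longrightarrow> MxM e = MxM f"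
  unfolding Jclass_def by blast

lemma Jclass_le: "idem f \<Longrightarrow> MxM f \<subseteq> MxM e \<Longrightarrow> idem e \<Longrightarrow> le_J (Jclass f) (Jclass e)"
  unfolding le_J_def by blast

theorem proposition4p10:
  shows "bij_betw (idem_classes_in :: ('a::{monoid_mult,finite}) set \<Rightarrow> 'a set set)
           idempotent_ideals (Open_order Idem_J le_J)"
proof (rule bij_betw_imageI)
  show "inj_on (idem_classes_in :: 'a set \<Rightarrow> _) idempotent_ideals"
  proof (rule inj_onI)
    have sub: "I \<subseteq> J" if I: "I \<in> idempotent_ideals" and J: "J \<in> idempotent_ideals"
      and eq: "idem_classes_in I = idem_classes_in J" for I J :: "'a set"
    proof
      fix x assume "x \<in> I"
      then obtain e where e: "idem e" "e \<in> I" "x \<in> MxM e" using ideal_generated I by blast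
      have "Jclass e \<in> idem_classes_in J" using eq e unfolding idem_classes_in_def by blast
      then obtain f where f: "idem f" "f \<in> J" "Jclass e = Jclass f"
        unfolding idem_classes_in_def by blast
      have "MxM e = MxM f" using Jclass_eq f e by blast
      moreover have "two_sided_ideal J" using J unfolding idempotent_ideals_def by blast
      ultimately show "x \<in> J" using MxM_sub f e by blast
    qed
    fix I J :: "'a set" assume "I \<in> idempotent_ideals" "J \<in> idempotent_ideals"
      "idem_classes_in I = idem_classes_in J"
    thus "I = J" using sub by (metis subset_antisym)
  qed
next
  show "idem_classes_in ` idempotent_ideals = Open_order Idem_J (le_J :: 'a set \<Rightarrow> _)"
  proof
    show "idem_classes_in ` idempotent_ideals \<subseteq> Open_order Idem_J (le_J :: 'a set \<Rightarrow> _)"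
    proof
      fix S assume "S \<in> idem_classes_in ` (idempotent_ideals :: 'a set set)"
      then obtain I :: "'a set" where I: "I \<in> idempotent_ideals" and S: "S = idem_classes_in I" by blast
      have id: "two_sided_ideal I" using I unfolding idempotent_ideals_def by blast
      have "S \<subseteq> Idem_J" unfolding S idem_classes_in_def Idem_J_def by blast
      moreover have "\<forall>Y\<in>S. \<forall>X\<in>Idem_J. le_J X Y \<longrightarrow> X \<in> S"
      proof (intro ballI impI)
        fix Y X assume Y: "Y \<in> S" and "X \<in> Idem_J" and le: "le_J X Y"
        obtain e where e: "idem e" "e \<in> I" "Y = Jclass e" using Y unfolding S idem_classes_in_def by blast
        obtain e' f where ef: "idem e'" "idem f" "X = Jclass e'" "Y = Jclass f" "MxM e' \<subseteq> MxM f"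
          using le unfolding le_J_def by blast
        have "MxM f = MxM e" using Jclass_eq ef e by metis
        hence "e' \<in> I" using ef x_in_MxM MxM_sub[OF id e(2)] by blast
        thus "X \<in> S" unfolding S idem_classes_in_def using ef by blast
      qed
      ultimately show "S \<in> Open_order Idem_J le_J" unfolding Open_order_def by blast
    qed
  next
    show "Open_order Idem_J (le_J :: 'a set \<Rightarrow> _) \<subseteq> idem_classes_in ` idempotent_ideals"
    proof
      fix S :: "'a set set" assume "S \<in> Open_order Idem_J le_J"
      hence Ssub: "S \<subseteq> Idem_J" and down: "\<And>Y X. Y \<in> S \<Longrightarrow> X \<in> Idem_J \<Longrightarrow> le_J X Y \<Longrightarrow> X \<in> S"
        unfolding Open_order_def by blast+
      define I where "I = (\<Union>e\<in>{e. idem e \<and> Jclass e \<in> S}. MxM e)"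
      have id: "two_sided_ideal I"
        unfolding two_sided_ideal_def I_def MxM_def
        by clarsimp (metis mult.assoc)
      have "I = {x * y | x y. x \<in> I \<and> y \<in> I}"
      proof
        show "I \<subseteq> {x * y | x y. x \<in> I \<and> y \<in> I}"
        proof
          fix z assume "z \<in> I"
          then obtain e m n where e: "idem e" "Jclass e \<in> S" "z = m * e * n"
            unfolding I_def MxM_def by blast
          have "z = (m * e) * (e * n)" using e unfolding idem_def by (metis mult.assoc)
          have "m * e \<in> MxM e" unfolding MxM_def by (metis (mono_tags, lifting) mem_Collect_eq mult_1_right)
          moreover have "e * n \<in> MxM e" unfolding MxM_def by (metis (mono_tags, lifting) mem_Collect_eq mult_1_left)
          ultimately have "m * e \<in> I" "e * n \<in> I" unfolding I_def using e by blast+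
          show "z \<in> {x * y | x y. x \<in> I \<and> y \<in> I}" using \<open>m * e \<in> I\<close> \<open>e * n \<in> I\<close> \<open>z = (m * e) * (e * n)\<close> by blast
        qed
      next
        show "{x * y | x y. x \<in> I \<and> y \<in> I} \<subseteq> I"
          using id unfolding two_sided_ideal_def by blast
      qed
      hence II: "I \<in> idempotent_ideals" using id unfolding idempotent_ideals_def by blast
      have "idem_classes_in I = S"
      proof
        show "idem_classes_in I \<subseteq> S"
        proof
          fix X assume "X \<in> idem_classes_in I"
          then obtain f where f: "idem f" "f \<in> I" "X = Jclass f" unfolding idem_classes_in_def by blast
          then obtain e where e: "idem e" "Jclass e \<in> S" "f \<in> MxM e" unfolding I_def by blast
          have "le_J (Jclass f) (Jclass e)" using Jclass_le f e MxM_mono by blast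
          moreover have "Jclass f \<in> Idem_J" unfolding Idem_J_def using f by blast
          ultimately show "X \<in> S" using down e f by blast
        qed
      next
        show "S \<subseteq> idem_classes_in I"
        proof
          fix X assume X: "X \<in> S"
          then obtain e where e: "idem e" "X = Jclass e" using Ssub unfolding Idem_J_def by blast
          have "e \<in> I" unfolding I_def using e X x_in_MxM by blast
          thus "X \<in> idem_classes_in I" unfolding idem_classes_in_def using e by blast
        qed
      qed
      thus "S \<in> idem_classes_in ` idempotent_ideals" using II by blast
    qed
  qed
qed

end
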